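(* Let $(G,\mathcal{A})$ be a local convergence pairing on $X$ and $A,B\in\mathcal{A}$. If $(f_i)\subset\mathrm{Stab}(A)\cap\mathrm{Stab}(B)$ acts as a convergence sequence on both $A$ and $B$, with $p$ the attractor of $(f_i)$ both in its action on $A$ and in its action on $B$, then the repeller $n$ of $(f_i)$ in its action on $A$ is also the repeller of $(f_i)$ in its action on $B$.
   Context: $X$ is a Peano continuum (compact, connected, locally connected metric space) without cut points and $G$ acts on $X$ by homeomorphisms; $\mathcal{A}$ is a $G$-invariant collection of closed subsets of $X$; $\mathrm{Stab}(A)=\{g\in G:g(A)=A\}$. For a closed $S\subset X$ and connected $B,C\subset X\setminus S$, $S$ separates $B$ from $C$ if they lie in different components of $X\setminus S$; $S$ separates $Y$ if it separates two points of $Y$. Closed sets $A,B$ cross if $A\cap B\neq\emptyset$ or ($A$ separates $B$ and $B$ separates $A$). A crossing sequence is $A_1,\dots,A_n$ with $A_i$ crossing $A_{i+1}$ for $1\le i<n$. $g_i(S)\to p$ means every neighborhood of $p$ contains $g_i(S)$ for all large $i$. A sequence of homeomorphisms $(g_i)$ of $Y$ is a convergence sequence on $Y$ with repeller $n$ and attractor $p$ if $g_i(C)\to p$ for every compact $C\subset Y\setminus\{n\}$. A group acts as a convergence group on $Y$ if every sequence of distinct elements has a subsequence that is a convergence sequence on $Y$. $(G,\mathcal{A})$ is a local convergence pairing on $X$ if: (1) $|A|>2$ for all $A\in\mathcal{A}$; (2) for each $\epsilon>0$ only finitely many $A\in\mathcal{A}$ have diameter $>\epsilon$; (3) for any $x,y\in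 X$ some finite $\mathcal{B}\subset\mathcal{A}$ has $\bigcup\mathcal{B}$ separating $x$ from $y$; (4) each $\mathrm{Stab}(A)$ acts as a convergence group on $A$; (5) for any $A,B\in\mathcal{A}$ with $|A\cap B|\le 2$: if $A\cap B=\{c\}$ then for any $b\in B\setminus\{c\}$ there is a finite crossing sequence $A,A_1,\dots,A_n,B$ in $\mathcal{A}$ with $\{b,c\}\cap A_i=\emptyset$ for $1\le i\le n$; if $|A\cap B|\ne1$ there is a crossing sequence $A,A_1,\dots,A_n,B$ in $\mathcal{A}$ with $(A\cap B)\cap A_i=\emptyset$ for $1\le i\le n$. *)

theory Defs
  imports "HOL-Analysis.Analysis" "HOL-Algebra.Group_Action"
begin

definition peano_continuum :: "'a::metric_space set \<Rightarrow> bool" where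
  "peano_continuum X \<longleftrightarrow> X \<noteq> {} \<and> compact X \<and> connected X \<and> locally connected X"

definition no_cut_points :: "'a::metric_space set \<Rightarrow> bool" where
  "no_cut_points X \<longleftrightarrow> (\<forall>x\<in>X. connected (X - {x}))"

definition acts_by_homeos :: "('g, 'c) monoid_scheme \<Rightarrow> ('g \<Rightarrow> 'a::metric_space \<Rightarrow> 'a) \<Rightarrow> 'a set \<Rightarrow> bool" where
  "acts_by_homeos G \<phi> X \<longleftrightarrow> group_action G X \<phi> \<and>
     (\<forall>g\<in>carrier G. homeomorphism X X (\<phi> g) (\<phi> (inv\<^bsub>G\<^esub> g)))"

definition Stab :: "('g, 'c) monoid_scheme \<Rightarrow> ('g \<Rightarrow> 'a \<Rightarrow> 'a) \<Rightarrow> 'a set \<Rightarrow> 'g set" where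
  "Stab G \<phi> A = {g \<in> carrier G. \<phi> g ` A = A}"

definition separates_pts :: "'a::metric_space set \<Rightarrow> 'a set \<Rightarrow> 'a \<Rightarrow> 'a \<Rightarrow> bool" where
  "separates_pts X S x y \<longleftrightarrow> x \<in> X - S \<and> y \<in> X - S \<and> \<not> connected_component (X - S) x y"

definition separates_set :: "'a::metric_space set \<Rightarrow> 'a set \<Rightarrow> 'a set \<Rightarrow> bool" where
  "separates_set X S Y \<longleftrightarrow> (\<exists>x\<in>Y. \<exists>y\<in>Y. separates_pts X S x y)"

definition crosses :: "'a::metric_space set \<Rightarrow> 'a set \<Rightarrow> 'a set \<Rightarrow> bool" where
  "crosses X A B \<longleftrightarrow> A \<inter> B \<noteq> {} \<or> (separates_set X A B \<and> separates_set X B A)"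

definition crossing_list :: "'a::metric_space set \<Rightarrow> 'a set list \<Rightarrow> bool" where
  "crossing_list X L \<longleftrightarrow> (\<forall>i. Suc i < length L \<longrightarrow> crosses X (L ! i) (L ! Suc i))"

definition crossing_seq_avoiding ::
  "'a::metric_space set \<Rightarrow> 'a set set \<Rightarrow> 'a set \<Rightarrow> 'a set \<Rightarrow> 'a set \<Rightarrow> bool" where
  "crossing_seq_avoiding X \<A> A B Z \<longleftrightarrow>
     (\<exists>L. L \<noteq> [] \<and> set L \<subseteq> \<A> \<and> (\<forall>D\<in>set L. D \<inter> Z = {}) \<and> crossing_list X (A # L @ [B]))"

definition sets_tendsto :: "(nat \<Rightarrow> 'a::topological_space set) \<Rightarrow> 'a \<Rightarrow> bool" where
  "sets_tendsto S p \<longleftrightarrow> (\<forall>U. open U \<and> p \<in> U \<longrightarrow> (\<forall>\<^sub>F i in sequentially. S i \<subseteq> U))"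

definition convergence_seq :: "'a::metric_space set \<Rightarrow> (nat \<Rightarrow> 'a \<Rightarrow> 'a) \<Rightarrow> 'a \<Rightarrow> 'a \<Rightarrow> bool" where
  "convergence_seq Y g n p \<longleftrightarrow> n \<in> Y \<and> p \<in> Y \<and> (\<forall>i. \<exists>h. homeomorphism Y Y (g i) h) \<and>
     (\<forall>C. compact C \<and> C \<subseteq> Y - {n} \<longrightarrow> sets_tendsto (\<lambda>i. g i ` C) p)"

definition convergence_group_on ::
  "'g set \<Rightarrow> ('g \<Rightarrow> 'a::metric_space \<Rightarrow> 'a) \<Rightarrow> 'a set \<Rightarrow> bool" where
  "convergence_group_on H \<phi> Y \<longleftrightarrow>
     (\<forall>s::nat \<Rightarrow> 'g. range s \<subseteq> H \<and> inj s \<longrightarrow>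
        (\<exists>r n p. strict_mono r \<and> convergence_seq Y (\<lambda>i. \<phi> (s (r i))) n p))"

definition local_convergence_pairing ::
  "'a::metric_space set \<Rightarrow> ('g, 'c) monoid_scheme \<Rightarrow> ('g \<Rightarrow> 'a \<Rightarrow> 'a) \<Rightarrow> 'a set set \<Rightarrow> bool" where
  "local_convergence_pairing X G \<phi> \<A> \<longleftrightarrow>
     peano_continuum X \<and> no_cut_points X \<and> acts_by_homeos G \<phi> X \<and>
     (\<forall>A\<in>\<A>. closed A \<and> A \<subseteq> X) \<and>
     (\<forall>g\<in>carrier G. \<forall>A\<in>\<A>. \<phi> g ` A \<in> \<A>) \<and>
     (\<forall>A\<in>\<A>. infinite A \<or> card A > 2) \<and>
     (\<forall>\<epsilon>>0. finite {A\<in>\<A>. diameter A > \<epsilon>}) \<and>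
     (\<forall>x\<in>X. \<forall>y\<in>X. x \<noteq> y \<longrightarrow> (\<exists>\<B>. \<B> \<subseteq> \<A> \<and> finite \<B> \<and> separates_pts X (\<Union>\<B>) x y)) \<and>
     (\<forall>A\<in>\<A>. convergence_group_on (Stab G \<phi> A) \<phi> A) \<and>
     (\<forall>A\<in>\<A>. \<forall>B\<in>\<A>. finite (A \<inter> B) \<and> card (A \<inter> B) \<le> 2 \<longrightarrow>
        (\<forall>c. A \<inter> B = {c} \<longrightarrow> (\<forall>b\<in>B - {c}. crossing_seq_avoiding X \<A> A B {b, c})) \<and>
        (card (A \<inter> B) \<noteq> 1 \<longrightarrow> crossing_seq_avoiding X \<A> A B (A \<inter> B)))"

end

theory Submission
  imports Defs
begin

lemma AH_group: "acts_by_homeos G \<phi> X \<Longrightarrow> group G"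
  unfolding acts_by_homeos_def group_action_def using group_hom.axioms(1) by (elim conjE)

lemma AH_homeo: "acts_by_homeos G \<phi> X \<Longrightarrow> g \<in> carrier G \<Longrightarrow> homeomorphism X X (\<phi> g) (\<phi> (inv\<^bsub>G\<^esub> g))"
  unfolding acts_by_homeos_def by simp

lemma AH_comp: "acts_by_homeos G \<phi> X \<Longrightarrow> x \<in> X \<Longrightarrow> g \<in> carrier G \<Longrightarrow> h \<in> carrier G \<Longrightarrow>
   \<phi> (g \<otimes>\<^bsub>G\<^esub> h) x = \<phi> g (\<phi> h x)"
  unfolding acts_by_homeos_def by (metis group_action.composition_rule)

lemma AH_inv_closed: "acts_by_homeos G \<phi> X \<Longrightarrow> g \<in> carrier G \<Longrightarrow> inv\<^bsub>G\<^esub> g \<in> carrier G"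
  by (rule group.inv_closed[OF AH_group])

lemma AH_m_closed: "acts_by_homeos G \<phi> X \<Longrightarrow> g \<in> carrier G \<Longrightarrow> h \<in> carrier G \<Longrightarrow> g \<otimes>\<^bsub>G\<^esub> h \<in> carrier G"
  by (rule monoid.m_closed[OF group.is_monoid[OF AH_group]])

lemma AH_facts:
  assumes "acts_by_homeos G \<phi> X" "g \<in> carrier G"
  shows "\<phi> g ` X = X" "\<phi> (inv\<^bsub>G\<^esub> g) ` X = X" "\<And>x. x \<in> X \<Longrightarrow> \<phi> (inv\<^bsub>G\<^esub> g) (\<phi> g x) = x"
    "\<And>x. x \<in> X \<Longrightarrow> \<phi> g (\<phi> (inv\<^bsub>G\<^esub> g) x) = x" "continuous_on X (\<phi> g)"
    "continuous_on X (\<phi> (inv\<^bsub>G\<^esub> g))" 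
  using AH_homeo[OF assms] unfolding homeomorphism_def by simp_all

lemma AH_inj: "acts_by_homeos G \<phi> X \<Longrightarrow> g \<in> carrier G \<Longrightarrow> inj_on (\<phi> g) X"
  by (metis AH_facts(3) inj_on_inverseI)

definition wcross :: "'a::metric_space set \<Rightarrow> 'a set \<Rightarrow> 'a set \<Rightarrow> bool" where
  "wcross X S T \<longleftrightarrow> S \<inter> T \<noteq> {} \<or> separates_set X S T"

lemma crosses_wcross: "crosses X S T \<Longrightarrow> wcross X S T \<and> wcross X T S"
  unfolding crosses_def wcross_def by blast

lemma LC_nbhd:
  assumes "locally connected X" "openin (top_of_set X) W" "x \<in> W"
  shows "\<exists>\<delta>>0. \<exists>V. connected V \<and> V \<subseteq> W \<and> (\<forall>y\<in>X. dist y x < \<delta> \<longrightarrow> y \<in> V)"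
proof -
  have "\<exists>U V. openin (top_of_set X) U \<and> connected V \<and> x \<in> U \<and> U \<subseteq> V \<and> V \<subseteq> W"
    using assms(1)[unfolded locally_def, rule_format, OF conjI[OF assms(2,3)]] .
  then obtain U V where UV: "openin (top_of_set X) U" "connected V" "x \<in> U" "U \<subseteq> V" "V \<subseteq> W"
    by (elim exE conjE)
  have "\<exists>e>0. \<forall>x'\<in>X. dist x' x < e \<longrightarrow> x' \<in> U"
    using UV(1,3) unfolding openin_euclidean_subtopology_iff by (elim conjE) (rule bspec)
  then obtain \<delta> where d: "\<delta> > 0" "\<forall>y\<in>X. dist y x < \<delta> \<longrightarrow> y \<in> U"
    by (elim exE conjE)
  show ?thesis
  proof (intro exI conjI)
    show "\<delta> > 0" by (rule d(1))
    show "connected V" "V \<subseteq> W" by (rule UV(2), rule UV(5))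
    show "\<forall>y\<in>X. dist y x < \<delta> \<longrightarrow> y \<in> V" using d(2) UV(4) by (simp add: subset_iff)
  qed
qed

lemma LC_ball:
  assumes "locally connected X" "x \<in> X" "\<epsilon> > 0"
  shows "\<exists>\<delta>>0. \<exists>V. connected V \<and> V \<subseteq> X \<inter> ball x \<epsilon> \<and> (\<forall>y\<in>X. dist y x < \<delta> \<longrightarrow> y \<in> V)"
proof -
  have "openin (top_of_set X) (X \<inter> ball x \<epsilon>)" by (simp add: openin_open_Int)
  moreover have "x \<in> X \<inter> ball x \<epsilon>" using assms by simp
  ultimately show ?thesis by (rule LC_nbhd[OF assms(1)])
qed

lemma meet:
  assumes LC: "locally connected X" and x: "x \<in> X" and T: "\<And>i. T i \<subseteq> X"
    and tt: "sets_tendsto T x" and wc: "\<And>i. wcross X (S i) (T i)" and e: "\<epsilon> > 0"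
  shows "eventually (\<lambda>i. S i \<inter> ball x \<epsilon> \<noteq> {}) sequentially"
proof -
  obtain \<delta> V where d: "\<delta> > 0" and V: "connected V" "V \<subseteq> X \<inter> ball x \<epsilon>"
     "\<forall>y\<in>X. dist y x < \<delta> \<longrightarrow> y \<in> V"
    using LC_ball[OF LC x e] by blast
  have "eventually (\<lambda>i. T i \<subseteq> ball x \<delta>) sequentially"
    using tt d unfolding sets_tendsto_def by auto
  then show ?thesis
  proof (rule eventually_mono)
    fix i assume Ti: "T i \<subseteq> ball x \<delta>"
    have TV: "T i \<subseteq> V" using Ti T V(3) by (force simp: dist_commute)
    show "S i \<inter> ball x \<epsilon> \<noteq> {}"
    proof (cases "S i \<inter> T i \<noteq> {}")
      case True thus ?thesis using TV V(2) by blast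
    next
      case False
      then obtain w z where wz: "w \<in> T i" "z \<in> T i" "separates_pts X (S i) w z"
        using wc[of i] unfolding wcross_def separates_set_def by blast
      show ?thesis
      proof
        assume "S i \<inter> ball x \<epsilon> = {}"
        hence "V \<subseteq> X - S i" using V(2) by blast
        hence "connected_component (X - S i) w z"
          using connected_componentI[OF V(1)] wz TV by blast
        thus False using wz(3) unfolding separates_pts_def by blast
      qed
    qed
  qed
qed

lemma sep_pres:
  assumes AH: "acts_by_homeos G \<phi> X" and g: "g \<in> carrier G" and S: "S \<subseteq> X"
    and sep: "separates_pts X S w z"
  shows "separates_pts X (\<phi> g ` S) (\<phi> g w) (\<phi> g z)"
proof -
  have w: "w \<in> X" "w \<notin> S" and z: "z \<in> X" "z \<notin> S" and nc: "\<not> connected_component (X - S) w z"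
    using sep unfolding separates_pts_def by auto
  have inj: "inj_on (\<phi> g) X" by (rule AH_inj[OF AH g])
  have nm: "\<phi> g u \<notin> \<phi> g ` S" if "u \<in> X" "u \<notin> S" for u
    using inj that S by (meson inj_on_image_mem_iff)
  have im: "\<phi> g u \<in> X" if "u \<in> X" for u using AH_facts(1)[OF AH g] that by blast
  have "\<not> connected_component (X - \<phi> g ` S) (\<phi> g w) (\<phi> g z)"
  proof
    assume "connected_component (X - \<phi> g ` S) (\<phi> g w) (\<phi> g z)"
    then obtain T where T: "connected T" "T \<subseteq> X - \<phi> g ` S" "\<phi> g w \<in> T" "\<phi> g z \<in> T"
      unfolding connected_component_def by blast
    have "connected (\<phi> (inv\<^bsub>G\<^esub> g) ` T)"
      using connected_continuous_image[OF continuous_on_subset[OF AH_facts(6)[OF AH g]] T(1)] T(2)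
      by blast
    moreover have "\<phi> (inv\<^bsub>G\<^esub> g) ` T \<subseteq> X - S"
    proof
      fix y assume "y \<in> \<phi> (inv\<^bsub>G\<^esub> g) ` T"
      then obtain t where t: "t \<in> T" "y = \<phi> (inv\<^bsub>G\<^esub> g) t" by blast
      have tX: "t \<in> X" using t T(2) by blast
      have yX: "y \<in> X" using AH_facts(2)[OF AH g] t tX by blast
      have "t = \<phi> g y" using AH_facts(4)[OF AH g tX] t by simp
      thus "y \<in> X - S" using yX t T(2) by blast
    qed
    moreover have "w \<in> \<phi> (inv\<^bsub>G\<^esub> g) ` T" using AH_facts(3)[OF AH g w(1)] T(3) by (metis imageI)
    moreover have "z \<in> \<phi> (inv\<^bsub>G\<^esub> g) ` T" using AH_facts(3)[OF AH g z(1)] T(4) by (metis imageI)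
    ultimately have "connected_component (X - S) w z" by (rule connected_componentI)
    thus False using nc by blast
  qed
  thus ?thesis unfolding separates_pts_def using nm im w z by blast
qed

lemma wcross_pres:
  assumes AH: "acts_by_homeos G \<phi> X" and g: "g \<in> carrier G" and S: "S \<subseteq> X" and T: "T \<subseteq> X"
    and wc: "wcross X S T"
  shows "wcross X (\<phi> g ` S) (\<phi> g ` T)"
proof (cases "S \<inter> T \<noteq> {}")
  case True thus ?thesis unfolding wcross_def by blast
next
  case False
  then obtain w z where "w \<in> T" "z \<in> T" "separates_pts X S w z"
    using wc unfolding wcross_def separates_set_def by blast
  thus ?thesis using sep_pres[OF AH g S] unfolding wcross_def separates_set_def by blast
qed

lemma st_subseq: "strict_mono r \<Longrightarrow> sets_tendsto T x \<Longrightarrow> sets_tendsto (\<lambda>i. T (r i)) x"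
  unfolding sets_tendsto_def using eventually_subseq by blast

lemma st_point: "sets_tendsto (\<lambda>i. F i ` {y}) x \<Longrightarrow> open U \<Longrightarrow> x \<in> U \<Longrightarrow> eventually (\<lambda>i. F i y \<in> U) sequentially"
  unfolding sets_tendsto_def by simp

lemma ev_get: "eventually P sequentially \<Longrightarrow> \<exists>i. P i"
  unfolding eventually_sequentially by blast

lemma ev_meet_closed:
  assumes "closed D" "\<And>\<epsilon>. \<epsilon> > 0 \<Longrightarrow> eventually (\<lambda>i. D \<inter> ball x \<epsilon> \<noteq> {}) sequentially"
  shows "x \<in> D"
proof -
  have "\<exists>y\<in>D. dist y x < \<epsilon>" if "\<epsilon> > 0" for \<epsilon>
  proof -
    have "D \<inter> ball x \<epsilon> \<noteq> {}" using ev_get[OF assms(2)[OF that]] by blast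
    thus ?thesis by (auto simp: dist_commute)
  qed
  thus ?thesis using closed_approachable[OF assms(1)] by blast
qed

lemma inv_dyn:
  assumes AH: "acts_by_homeos G \<phi> X" and AX: "A \<subseteq> X" and cA: "compact A"
    and h: "\<And>i. h i \<in> carrier G" and hA: "\<And>i. \<phi> (h i) ` A = A"
    and dyn: "\<And>K. compact K \<Longrightarrow> K \<subseteq> A - {r} \<Longrightarrow> sets_tendsto (\<lambda>i. \<phi> (h i) ` K) a"
    and K: "compact K" "K \<subseteq> A - {a}"
  shows "sets_tendsto (\<lambda>i. \<phi> (inv\<^bsub>G\<^esub> (h i)) ` K) r"
  unfolding sets_tendsto_def
proof (intro allI impI)
  fix U assume U: "open U \<and> r \<in> U"
  have cK': "compact (A \<inter> - U)" using cA U by (intro compact_Int_closed) auto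
  have "A \<inter> - U \<subseteq> A - {r}" using U by blast
  hence st: "sets_tendsto (\<lambda>i. \<phi> (h i) ` (A \<inter> - U)) a" using dyn cK' by blast
  have "open (- K)" using K(1) by (intro open_Compl compact_imp_closed)
  moreover have "a \<in> - K" using K(2) by blast
  ultimately have ev: "eventually (\<lambda>i. \<phi> (h i) ` (A \<inter> - U) \<subseteq> - K) sequentially"
    using st unfolding sets_tendsto_def by blast
  show "eventually (\<lambda>i. \<phi> (inv\<^bsub>G\<^esub> (h i)) ` K \<subseteq> U) sequentially"
    using ev
  proof (rule eventually_mono)
    fix i assume H: "\<phi> (h i) ` (A \<inter> - U) \<subseteq> - K"
    show "\<phi> (inv\<^bsub>G\<^esub> (h i)) ` K \<subseteq> U"
    proof
      fix y assume "y \<in> \<phi> (inv\<^bsub>G\<^esub> (h i)) ` K"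
      then obtain k where k: "k \<in> K" "y = \<phi> (inv\<^bsub>G\<^esub> (h i)) k" by blast
      have "k \<in> \<phi> (h i) ` A" using k K(2) hA[of i] by blast
      then obtain z where z: "z \<in> A" "k = \<phi> (h i) z" by blast
      have "y = z" using k(2) z AH_facts(3)[OF AH h[of i], of z] AX by blast
      show "y \<in> U"
      proof (rule ccontr)
        assume "y \<notin> U"
        hence "k \<in> \<phi> (h i) ` (A \<inter> - U)" using z \<open>y = z\<close> by blast
        thus False using H k(1) by blast
      qed
    qed
  qed
qed

lemma three_pts:
  assumes "infinite A \<or> card A > 2"
  shows "\<exists>y1 y2. y1 \<in> A - {r} \<and> y2 \<in> A - {r} \<and> y1 \<noteq> y2"
proof (rule ccontr)
  assume H: "\<not> ?thesis"
  have "\<exists>y. A - {r} \<subseteq> {y}"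
  proof (cases "A - {r} = {}")
    case True thus ?thesis by blast
  next
    case False
    then obtain y where "y \<in> A - {r}" by blast
    thus ?thesis using H by blast
  qed
  then obtain y where "A \<subseteq> {r, y}" by blast
  moreover have "card {r, y} \<le> 2" by (simp add: card_insert_le_m1)
  ultimately have "finite A \<and> card A \<le> 2"
    by (meson card_mono finite.emptyI finite.insertI finite_subset le_trans)
  thus False using assms by linarith
qed

lemma noniso:
  assumes AH: "acts_by_homeos G \<phi> X" and AX: "A \<subseteq> X" and card: "infinite A \<or> card A > 2"
    and h: "\<And>i. h i \<in> carrier G" and hA: "\<And>i. \<phi> (h i) ` A = A"
    and dyn: "\<And>K. compact K \<Longrightarrow> K \<subseteq> A - {r} \<Longrightarrow> sets_tendsto (\<lambda>i. \<phi> (h i) ` K) a"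
    and e: "\<epsilon> > 0"
  shows "\<exists>y\<in>A. y \<noteq> a \<and> dist y a < \<epsilon>"
proof -
  obtain y1 y2 where y: "y1 \<in> A - {r}" "y2 \<in> A - {r}" "y1 \<noteq> y2" using three_pts[OF card] by blast
  have t1: "sets_tendsto (\<lambda>i. \<phi> (h i) ` {y1}) a" using y by (intro dyn) auto
  have t2: "sets_tendsto (\<lambda>i. \<phi> (h i) ` {y2}) a" using y by (intro dyn) auto
  have "eventually (\<lambda>i. \<phi> (h i) y1 \<in> ball a \<epsilon> \<and> \<phi> (h i) y2 \<in> ball a \<epsilon>) sequentially"
    using st_point[OF t1, of "ball a \<epsilon>"] st_point[OF t2, of "ball a \<epsilon>"] e
    by (simp add: eventually_conj)
  then obtain i where i: "\<phi> (h i) y1 \<in> ball a \<epsilon>" "\<phi> (h i) y2 \<in> ball a \<epsilon>" using ev_get by blast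
  have ne: "\<phi> (h i) y1 \<noteq> \<phi> (h i) y2" using AH_inj[OF AH h[of i]] y AX by (meson Diff_iff inj_on_eq_iff subsetD)
  have inA: "\<phi> (h i) y1 \<in> A" "\<phi> (h i) y2 \<in> A" using hA[of i] y by auto
  show ?thesis
  proof (cases "\<phi> (h i) y1 = a")
    case True
    hence "\<phi> (h i) y2 \<noteq> a" using ne by simp
    thus ?thesis using inA(2) i(2) by (auto simp: dist_commute)
  next
    case False thus ?thesis using inA i by (auto simp: dist_commute)
  qed
qed

lemma trick:
  assumes LC: "locally connected X" and AX: "A \<subseteq> X" and S: "closed S" and p: "p \<in> A" "p \<notin> S"
    and ni: "\<And>\<epsilon>. \<epsilon> > 0 \<Longrightarrow> \<exists>y\<in>A. y \<noteq> p \<and> dist y p < \<epsilon>"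
    and sep: "separates_set X S A"
  shows "\<exists>w\<in>A-{p}. \<exists>z\<in>A-{p}. separates_pts X S w z"
proof -
  obtain w z where wz: "w \<in> A" "z \<in> A" "separates_pts X S w z"
    using sep unfolding separates_set_def by blast
  have wz': "w \<in> X - S" "z \<in> X - S" "\<not> connected_component (X - S) w z"
    using wz(3) unfolding separates_pts_def by auto
  have op: "openin (top_of_set X) (X - S)"
    using S by (metis Diff_eq openin_open_Int open_Compl Int_commute)
  have pW: "p \<in> X - S" using p AX by blast
  obtain \<delta> V where d: "\<delta> > 0" and V: "connected V" "V \<subseteq> X - S" "\<forall>y\<in>X. dist y p < \<delta> \<longrightarrow> y \<in> V"
    using LC_nbhd[OF LC op pW] by blast
  obtain a where a: "a \<in> A" "a \<noteq> p" "dist a p < \<delta>" using ni[OF d] by blast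
  have aV: "a \<in> V" using a AX V(3) by blast
  have pV: "p \<in> V" using pW V(3) d by simp
  have cpa: "connected_component (X - S) p a" by (rule connected_componentI[OF V(1,2) pV aV])
  have aXS: "a \<in> X - S" using aV V(2) by blast
  show ?thesis
  proof (cases "w = p")
    case True
    have "z \<noteq> p" using True wz'(1,3) by auto
    moreover have "separates_pts X S a z"
      unfolding separates_pts_def using aXS wz'(2,3) True cpa connected_component_trans by blast
    ultimately show ?thesis using a wz by blast
  next
    case wp: False
    show ?thesis
    proof (cases "z = p")
      case True
      have "separates_pts X S w a"
        unfolding separates_pts_def using aXS wz'(1,3) True cpa connected_component_trans
          connected_component_sym by blast
      thus ?thesis using a wz wp by blast
    next
      case False thus ?thesis using wz wp by blast
    qed
  qed
qed

lemma PF: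
  assumes "local_convergence_pairing X G \<phi> \<A>"
  shows "compact X" "locally connected X" "acts_by_homeos G \<phi> X"
    "\<And>D. D \<in> \<A> \<Longrightarrow> closed D" "\<And>D. D \<in> \<A> \<Longrightarrow> D \<subseteq> X"
    "\<And>D. D \<in> \<A> \<Longrightarrow> infinite D \<or> card D > 2"
    "\<And>g D. g \<in> carrier G \<Longrightarrow> D \<in> \<A> \<Longrightarrow> \<phi> g ` D \<in> \<A>"
    "\<And>\<epsilon>. \<epsilon> > 0 \<Longrightarrow> finite {D\<in>\<A>. diameter D > \<epsilon>}"
  using assms unfolding local_convergence_pairing_def peano_continuum_def by auto

lemma PF_compact: "local_convergence_pairing X G \<phi> \<A> \<Longrightarrow> D \<in> \<A> \<Longrightarrow> compact D"
  using PF(1,4,5) by (metis compact_Int_closed inf.absorb_iff2)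

lemma PF_cond5:
  assumes "local_convergence_pairing X G \<phi> \<A>" "A \<in> \<A>" "B \<in> \<A>" "A \<inter> B = {c}" "b \<in> B - {c}"
  shows "crossing_seq_avoiding X \<A> A B {b, c}"
proof -
  have "finite (A \<inter> B) \<and> card (A \<inter> B) \<le> 2" using assms(4) by simp
  thus ?thesis using assms unfolding local_convergence_pairing_def by blast
qed

lemma step:
  fixes h :: "nat \<Rightarrow> 'g" and T :: "nat \<Rightarrow> 'a::metric_space set"
  assumes P: "local_convergence_pairing X G \<phi> \<A>" and h: "\<And>i. h i \<in> carrier G" and S: "S \<in> \<A>"
    and T: "\<And>i. T i \<subseteq> X" and x: "x \<in> X" and tt: "sets_tendsto T x"
    and wc: "\<And>i. wcross X (\<phi> (h i) ` S) (T i)"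
  shows "sets_tendsto (\<lambda>i. \<phi> (h i) ` S) x \<or>
         (\<exists>(r::nat\<Rightarrow>nat) D. strict_mono r \<and> (\<forall>i. \<phi> (h (r i)) ` S = D) \<and> x \<in> D \<and> D \<in> \<A>)"
proof (cases "\<exists>D. infinite {i. \<phi> (h i) ` S = D}")
  case True
  then obtain D where D: "infinite {i. \<phi> (h i) ` S = D}" by blast
  then obtain r :: "nat \<Rightarrow> nat" where r: "strict_mono r" "\<And>n. r n \<in> {i. \<phi> (h i) ` S = D}"
    using infinite_enumerate by blast
  have rD: "\<And>i. \<phi> (h (r i)) ` S = D" using r(2) by simp
  have DA: "D \<in> \<A>" using PF(7)[OF P h S] rD by metis
  have "x \<in> D"
  proof (rule ev_meet_closed)
    show "closed D" using PF(4)[OF P DA] .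
    fix \<epsilon> :: real assume e: "\<epsilon> > 0"
    show "eventually (\<lambda>i. D \<inter> ball x \<epsilon> \<noteq> {}) sequentially"
      using meet[OF PF(2)[OF P] x T st_subseq[OF r(1) tt], of "\<lambda>i. D", OF _ e] wc rD by metis
  qed
  moreover have "\<forall>i. \<phi> (h (r i)) ` S = D" using rD by blast
  ultimately show ?thesis using r(1) DA by blast
next
  case False
  hence fin: "\<And>D. finite {i. \<phi> (h i) ` S = D}" by blast
  have SA: "\<And>i. \<phi> (h i) ` S \<in> \<A>" using PF(7)[OF P h S] .
  have bnd: "\<And>i. bounded (\<phi> (h i) ` S)"
    using PF(5)[OF P SA] PF(1)[OF P] by (meson bounded_subset compact_imp_bounded)
  have "sets_tendsto (\<lambda>i. \<phi> (h i) ` S) x"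
    unfolding sets_tendsto_def
  proof (intro allI impI)
    fix U assume U: "open U \<and> x \<in> U"
    then obtain e where e: "e > 0" "ball x e \<subseteq> U" using open_contains_ball by blast
    define \<epsilon> where "\<epsilon> = e / 3"
    have ep: "\<epsilon> > 0" using e unfolding \<epsilon>_def by simp
    have "{i. diameter (\<phi> (h i) ` S) > \<epsilon>} \<subseteq> (\<Union>D\<in>{D\<in>\<A>. diameter D > \<epsilon>}. {i. \<phi> (h i) ` S = D})"
      using SA by blast
    hence "finite {i. diameter (\<phi> (h i) ` S) > \<epsilon>}"
      using PF(8)[OF P ep] fin by (meson finite_UN_I finite_subset)
    hence ev1: "eventually (\<lambda>i. diameter (\<phi> (h i) ` S) \<le> \<epsilon>) sequentially"
      unfolding cofinite_eq_sequentially[symmetric] eventually_cofinite by (simp add: not_le)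
    have ev2: "eventually (\<lambda>i. \<phi> (h i) ` S \<inter> ball x \<epsilon> \<noteq> {}) sequentially"
      using meet[OF PF(2)[OF P] x T tt wc ep] .
    show "eventually (\<lambda>i. \<phi> (h i) ` S \<subseteq> U) sequentially"
      using eventually_conj[OF ev1 ev2]
    proof (rule eventually_mono)
      fix i assume H: "diameter (\<phi> (h i) ` S) \<le> \<epsilon> \<and> \<phi> (h i) ` S \<inter> ball x \<epsilon> \<noteq> {}"
      then obtain s' where s'0: "s' \<in> \<phi> (h i) ` S \<inter> ball x \<epsilon>" by blast
      hence s': "s' \<in> \<phi> (h i) ` S" "dist x s' < \<epsilon>" by auto
      show "\<phi> (h i) ` S \<subseteq> U"
      proof
        fix s assume s: "s \<in> \<phi> (h i) ` S"
        have "dist s' s \<le> \<epsilon>" using diameter_bounded_bound[OF bnd s' (1) s] H by linarith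
        hence "dist x s < e" using s'(2) e(1) dist_triangle[of x s s'] unfolding \<epsilon>_def by linarith
        thus "s \<in> U" using e(2) by auto
      qed
    qed
  qed
  thus ?thesis by blast
qed

lemma step_avoid:
  fixes h :: "nat \<Rightarrow> 'g" and T :: "nat \<Rightarrow> 'a::metric_space set"
  assumes P: "local_convergence_pairing X G \<phi> \<A>" and h: "\<And>i. h i \<in> carrier G" and S: "S \<in> \<A>"
    and T: "\<And>i. T i \<subseteq> X" and x: "x \<in> X" and tt: "sets_tendsto T x"
    and wc: "\<And>i. wcross X (\<phi> (h i) ` S) (T i)"
    and av: "\<And>i. x \<notin> \<phi> (h i) ` S"
  shows "sets_tendsto (\<lambda>i. \<phi> (h i) ` S) x"
  using step[OF P h S T x tt wc] av by metis

lemma stab_inv: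
  assumes AH: "acts_by_homeos G \<phi> X" and g: "g \<in> carrier G" and D: "D \<subseteq> X" and gD: "\<phi> g ` D = D"
  shows "\<phi> (inv\<^bsub>G\<^esub> g) ` D = D"
proof -
  have "\<phi> (inv\<^bsub>G\<^esub> g) ` D = \<phi> (inv\<^bsub>G\<^esub> g) ` (\<phi> g ` D)" using gD by simp
  also have "\<dots> = D" using AH_facts(3)[OF AH g] D by (force simp: image_image)
  finally show ?thesis .
qed

lemma avoid_img:
  assumes AH: "acts_by_homeos G \<phi> X" and g: "g \<in> carrier G" and D: "D \<subseteq> X"
    and x: "x \<in> X" "\<phi> g x = x" "x \<notin> D"
  shows "x \<notin> \<phi> g ` D"
  using AH_inj[OF AH g] D x by (metis inj_on_image_mem_iff)

lemma lemK:
  fixes v :: "nat \<Rightarrow> 'g" and X :: "'a::metric_space set"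
  assumes P: "local_convergence_pairing X G \<phi> \<A>" and A: "A \<in> \<A>" and E: "E \<in> \<A>"
    and AE: "A \<inter> E = {n}" and pA: "p \<in> A" and pE: "p \<notin> E"
    and v: "\<And>i. v i \<in> Stab G \<phi> A \<inter> Stab G \<phi> E"
    and vp: "\<And>i. \<phi> (v i) p = p"
    and dyn: "\<And>K. compact K \<Longrightarrow> K \<subseteq> A - {n} \<Longrightarrow> sets_tendsto (\<lambda>i. \<phi> (v i) ` K) p"
  shows False
proof -
  have AH: "acts_by_homeos G \<phi> X" using PF(3)[OF P] .
  have LC: "locally connected X" using PF(2)[OF P] .
  have vc: "\<And>i. v i \<in> carrier G" and vA: "\<And>i. \<phi> (v i) ` A = A" and vE: "\<And>i. \<phi> (v i) ` E = E"
    using v unfolding Stab_def by auto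
  have AX: "A \<subseteq> X" and EX: "E \<subseteq> X" using PF(5)[OF P] A E by auto
  have nA: "n \<in> A" and nE: "n \<in> E" using AE by auto
  have pX: "p \<in> X" using pA AX by blast
  have pn: "p \<noteq> n" using pE nE by blast
  have vn: "\<And>i. \<phi> (v i) n = n"
  proof -
    fix i
    have "\<phi> (v i) n \<in> A \<inter> E" using vA[of i] vE[of i] nA nE by blast
    thus "\<phi> (v i) n = n" using AE by blast
  qed
  have "crossing_seq_avoiding X \<A> E A {p, n}"
    using PF_cond5[OF P E A _, of n p] AE pA pn by (simp add: Int_commute)
  then obtain L where L: "L \<noteq> []" "set L \<subseteq> \<A>" "\<forall>D\<in>set L. D \<inter> {p, n} = {}"
      "crossing_list X (E # L @ [A])"
    unfolding crossing_seq_avoiding_def by blast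
  define k where "k = length L"
  define M where "M = E # L @ [A]"
  have kpos: "k > 0" using L(1) unfolding k_def by simp
  have cr: "\<And>t. Suc t < k + 2 \<Longrightarrow> crosses X (M ! t) (M ! Suc t)"
    using L(4) unfolding crossing_list_def M_def k_def by simp
  have M0: "M ! 0 = E" unfolding M_def by simp
  have MS: "\<And>j. j < k \<Longrightarrow> M ! Suc j = L ! j" unfolding M_def k_def by (simp add: nth_append)
  have Mk: "M ! Suc k = A" unfolding M_def k_def by simp
  have LA: "\<And>j. j < k \<Longrightarrow> L ! j \<in> \<A>" using L(2) unfolding k_def by (meson nth_mem subsetD)
  have Lav: "\<And>j. j < k \<Longrightarrow> p \<notin> L ! j \<and> n \<notin> L ! j" using L(3) unfolding k_def by (meson disjoint_iff insertCI nth_mem)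
  have LX: "\<And>j. j < k \<Longrightarrow> L ! j \<subseteq> X" using LA PF(5)[OF P] by blast
  have Lcl: "\<And>j. j < k \<Longrightarrow> closed (L ! j)" using LA PF(4)[OF P] by blast
  have imgav: "\<And>j i. j < k \<Longrightarrow> p \<notin> \<phi> (v i) ` (L ! j)"
    using avoid_img[OF AH vc LX pX vp] Lav by blast
  have ivc: "\<And>i. inv\<^bsub>G\<^esub> (v i) \<in> carrier G" using AH_inv_closed[OF AH vc] .
  have ivA: "\<And>i. \<phi> (inv\<^bsub>G\<^esub> (v i)) ` A = A" using stab_inv[OF AH vc AX vA] .
  have idyn: "\<And>K. compact K \<Longrightarrow> K \<subseteq> A - {p} \<Longrightarrow> sets_tendsto (\<lambda>i. \<phi> (inv\<^bsub>G\<^esub> (v i)) ` K) n"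
    using inv_dyn[OF AH AX PF_compact[OF P A] vc vA dyn] by blast
  have ni: "\<And>\<epsilon>. \<epsilon> > 0 \<Longrightarrow> \<exists>y\<in>A. y \<noteq> n \<and> dist y n < \<epsilon>"
    using noniso[OF AH AX PF(6)[OF P A] ivc ivA idyn] by blast
  have claim: "d < k \<Longrightarrow> sets_tendsto (\<lambda>i. \<phi> (v i) ` (L ! (k - Suc d))) p" for d
  proof (induction d)
    case 0
    define j where "j = k - 1"
    have j: "j < k" "Suc j = k" using kpos unfolding j_def by auto
    have "crosses X (L ! j) A" using cr[of k] MS[OF j(1)] Mk j by simp
    hence wc: "wcross X (L ! j) A" using crosses_wcross by blast
    have "sets_tendsto (\<lambda>i. \<phi> (v i) ` (L ! j)) p"
    proof (cases "L ! j \<inter> A \<noteq> {}")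
      case True
      then obtain y where y: "y \<in> L ! j" "y \<in> A" by blast
      have yn: "y \<noteq> n" using y Lav[OF j(1)] by blast
      show ?thesis
      proof (rule step_avoid[OF P vc LA[OF j(1)], of "\<lambda>i. \<phi> (v i) ` {y}"])
        show "\<And>i. \<phi> (v i) ` {y} \<subseteq> X" using vA y AX by blast
        show "p \<in> X" by (rule pX)
        show "sets_tendsto (\<lambda>i. \<phi> (v i) ` {y}) p" using y yn by (intro dyn) auto
        show "\<And>i. wcross X (\<phi> (v i) ` (L ! j)) (\<phi> (v i) ` {y})"
          unfolding wcross_def using y by blast
        show "\<And>i. p \<notin> \<phi> (v i) ` (L ! j)" using imgav[OF j(1)] .
      qed
    next
      case False
      hence "separates_set X (L ! j) A" using wc unfolding wcross_def by blast
      then obtain w z where wz: "w \<in> A - {n}" "z \<in> A - {n}" "separates_pts X (L ! j) w z"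
        using trick[OF LC AX Lcl[OF j(1)] nA _ ni] Lav[OF j(1)] by blast
      show ?thesis
      proof (rule step_avoid[OF P vc LA[OF j(1)], of "\<lambda>i. \<phi> (v i) ` {w, z}"])
        show "\<And>i. \<phi> (v i) ` {w, z} \<subseteq> X" using vA wz AX by blast
        show "p \<in> X" by (rule pX)
        show "sets_tendsto (\<lambda>i. \<phi> (v i) ` {w, z}) p" using wz by (intro dyn) auto
        show "\<And>i. wcross X (\<phi> (v i) ` (L ! j)) (\<phi> (v i) ` {w, z})"
          unfolding wcross_def separates_set_def using sep_pres[OF AH vc LX[OF j(1)] wz(3)] by blast
        show "\<And>i. p \<notin> \<phi> (v i) ` (L ! j)" using imgav[OF j(1)] .
      qed
    qed
    thus ?case unfolding j_def by simp
  next
    case (Suc d)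
    define j where "j = k - Suc (Suc d)"
    have j: "j < k" "Suc j < k" "Suc j = k - Suc d" using Suc.prems unfolding j_def by auto
    have IH: "sets_tendsto (\<lambda>i. \<phi> (v i) ` (L ! Suc j)) p" using Suc.IH Suc.prems j(3) by simp
    have "crosses X (L ! j) (L ! Suc j)" using cr[of "Suc j"] MS[OF j(1)] MS[OF j(2)] j by simp
    hence wc: "wcross X (L ! j) (L ! Suc j)" using crosses_wcross by blast
    have "sets_tendsto (\<lambda>i. \<phi> (v i) ` (L ! j)) p"
    proof (rule step_avoid[OF P vc LA[OF j(1)] _ pX IH])
      show "\<And>i. \<phi> (v i) ` (L ! Suc j) \<subseteq> X" using AH_facts(1)[OF AH vc] LX[OF j(2)] by blast
      show "\<And>i. wcross X (\<phi> (v i) ` (L ! j)) (\<phi> (v i) ` (L ! Suc j))"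
        using wcross_pres[OF AH vc LX[OF j(1)] LX[OF j(2)] wc] .
      show "\<And>i. p \<notin> \<phi> (v i) ` (L ! j)" using imgav[OF j(1)] .
    qed
    thus ?case unfolding j_def by simp
  qed
  have T0: "sets_tendsto (\<lambda>i. \<phi> (v i) ` (L ! 0)) p" using claim[of "k - 1"] kpos by simp
  have "crosses X E (L ! 0)" using cr[of 0] M0 MS[OF kpos] by simp
  hence wc: "wcross X E (L ! 0)" using crosses_wcross by blast
  have wci: "\<And>i. wcross X E (\<phi> (v i) ` (L ! 0))"
    using wcross_pres[OF AH vc EX LX[OF kpos] wc] vE by metis
  have "p \<in> E"
  proof (rule ev_meet_closed[OF PF(4)[OF P E]])
    fix \<epsilon> :: real assume "\<epsilon> > 0"
    thus "eventually (\<lambda>i. E \<inter> ball p \<epsilon> \<noteq> {}) sequentially"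
      using meet[OF LC pX _ T0 wci] AH_facts(1)[OF AH vc] LX[OF kpos] by blast
  qed
  thus False using pE by blast
qed

lemma inv_img:
  assumes AH: "acts_by_homeos G \<phi> X" and g: "g \<in> carrier G" and D: "D \<subseteq> X"
  shows "\<phi> (inv\<^bsub>G\<^esub> g) ` (\<phi> g ` D) = D"
  using AH_facts(3)[OF AH g] D by (force simp: image_image)

lemma img_comp:
  assumes AH: "acts_by_homeos G \<phi> X" and g: "g \<in> carrier G" and h: "h \<in> carrier G" and D: "D \<subseteq> X"
  shows "\<phi> (g \<otimes>\<^bsub>G\<^esub> h) ` D = \<phi> g ` (\<phi> h ` D)"
proof -
  have "\<phi> (g \<otimes>\<^bsub>G\<^esub> h) ` D = (\<phi> g \<circ> \<phi> h) ` D"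
    using AH_comp[OF AH _ g h] D by (intro image_cong) auto
  thus ?thesis by (simp add: image_comp)
qed

lemma lemL:
  fixes f :: "nat \<Rightarrow> 'g" and X :: "'a::metric_space set"
  assumes P: "local_convergence_pairing X G \<phi> \<A>" and A: "A \<in> \<A>" and B: "B \<in> \<A>"
    and AB: "A \<inter> B = {p}"
    and f: "\<And>i. f i \<in> Stab G \<phi> A \<inter> Stab G \<phi> B"
    and cs: "convergence_seq A (\<lambda>i. \<phi> (f i)) n p"
  shows "n \<in> B"
proof -
  have AH: "acts_by_homeos G \<phi> X" using PF(3)[OF P] .
  have LC: "locally connected X" using PF(2)[OF P] .
  have fc: "\<And>i. f i \<in> carrier G" and fA: "\<And>i. \<phi> (f i) ` A = A" and fB: "\<And>i. \<phi> (f i) ` B = B"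
    using f unfolding Stab_def by auto
  have AX: "A \<subseteq> X" and BX: "B \<subseteq> X" using PF(5)[OF P] A B by auto
  have pA: "p \<in> A" and pB: "p \<in> B" using AB by auto
  have nA: "n \<in> A" using cs unfolding convergence_seq_def by blast
  have pX: "p \<in> X" and nX: "n \<in> X" using pA nA AX by auto
  have fp: "\<And>i. \<phi> (f i) p = p"
  proof -
    fix i
    have "\<phi> (f i) p \<in> A \<inter> B" using fA[of i] fB[of i] pA pB by blast
    thus "\<phi> (f i) p = p" using AB by blast
  qed
  have fdyn: "\<And>K. compact K \<Longrightarrow> K \<subseteq> A - {n} \<Longrightarrow> sets_tendsto (\<lambda>i. \<phi> (f i) ` K) p"
    using cs unfolding convergence_seq_def by blast
  define g where "g i = inv\<^bsub>G\<^esub> (f i)" for i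
  have gc: "\<And>i. g i \<in> carrier G" unfolding g_def using AH_inv_closed[OF AH fc] .
  have gA: "\<And>i. \<phi> (g i) ` A = A" unfolding g_def using stab_inv[OF AH fc AX fA] .
  have gB: "\<And>i. \<phi> (g i) ` B = B" unfolding g_def using stab_inv[OF AH fc BX fB] .
  have gp: "\<And>i. \<phi> (g i) p = p" unfolding g_def using AH_facts(3)[OF AH fc pX] fp by metis
  have gdyn: "\<And>K. compact K \<Longrightarrow> K \<subseteq> A - {p} \<Longrightarrow> sets_tendsto (\<lambda>i. \<phi> (g i) ` K) n"
    unfolding g_def using inv_dyn[OF AH AX PF_compact[OF P A] fc fA fdyn] by blast
  have pni: "\<And>\<epsilon>. \<epsilon> > 0 \<Longrightarrow> \<exists>y\<in>A. y \<noteq> p \<and> dist y p < \<epsilon>"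
    using noniso[OF AH AX PF(6)[OF P A] fc fA fdyn] by blast
  obtain b where b: "b \<in> B - {p}" using three_pts[OF PF(6)[OF P B], of p] by blast
  have "crossing_seq_avoiding X \<A> A B {b, p}" using PF_cond5[OF P A B AB b] .
  then obtain L where L: "L \<noteq> []" "set L \<subseteq> \<A>" "\<forall>D\<in>set L. D \<inter> {b, p} = {}"
      "crossing_list X (A # L @ [B])"
    unfolding crossing_seq_avoiding_def by blast
  define k where "k = length L"
  define M where "M = A # L @ [B]"
  have kpos: "k > 0" using L(1) unfolding k_def by simp
  have cr: "\<And>t. Suc t < k + 2 \<Longrightarrow> crosses X (M ! t) (M ! Suc t)"
    using L(4) unfolding crossing_list_def M_def k_def by simp
  have M0: "M ! 0 = A" unfolding M_def by simp
  have MS: "\<And>j. j < k \<Longrightarrow> M ! Suc j = L ! j" unfolding M_def k_def by (simp add: nth_append)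
  have Mk: "M ! Suc k = B" unfolding M_def k_def by simp
  have LA: "\<And>j. j < k \<Longrightarrow> L ! j \<in> \<A>" using L(2) unfolding k_def by (meson nth_mem subsetD)
  have Lav: "\<And>j. j < k \<Longrightarrow> p \<notin> L ! j" using L(3) unfolding k_def by (meson disjoint_iff insertCI nth_mem)
  have LX: "\<And>j. j < k \<Longrightarrow> L ! j \<subseteq> X" using LA PF(5)[OF P] by blast
  have Lcl: "\<And>j. j < k \<Longrightarrow> closed (L ! j)" using LA PF(4)[OF P] by blast
  have imgav: "\<And>j i. j < k \<Longrightarrow> p \<notin> \<phi> (g i) ` (L ! j)"
    using avoid_img[OF AH gc LX pX gp] Lav by blast
  have noconst: False
    if j: "j < k" and r: "strict_mono r" and rD: "\<forall>i. \<phi> (g (r i)) ` (L ! j) = D"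
       and nD: "n \<in> D" and DA: "D \<in> \<A>" for j and r :: "nat \<Rightarrow> nat" and D
  proof -
    have pD: "p \<notin> D" using imgav[OF j, of "r 0"] rD by metis
    have DX: "D \<subseteq> X" using PF(5)[OF P DA] .
    have Dcl: "closed D" using PF(4)[OF P DA] .
    define g0 where "g0 = inv\<^bsub>G\<^esub> (g (r 0))"
    have g0c: "g0 \<in> carrier G" unfolding g0_def using AH_inv_closed[OF AH gc] .
    have g0A: "\<phi> g0 ` A = A" unfolding g0_def using stab_inv[OF AH gc AX gA] .
    have g0p: "\<phi> g0 p = p" unfolding g0_def using AH_facts(3)[OF AH gc pX] gp by metis
    have g0D: "\<phi> g0 ` D = L ! j" unfolding g0_def using inv_img[OF AH gc LX[OF j]] rD by metis
    define w where "w i = g (r i) \<otimes>\<^bsub>G\<^esub> g0" for i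
    have wc: "\<And>i. w i \<in> carrier G" unfolding w_def using AH_m_closed[OF AH gc g0c] .
    have wA: "\<And>i. \<phi> (w i) ` A = A" unfolding w_def using img_comp[OF AH gc g0c AX] g0A gA by simp
    have wD: "\<And>i. \<phi> (w i) ` D = D" unfolding w_def using img_comp[OF AH gc g0c DX] g0D rD by simp
    have wp: "\<And>i. \<phi> (w i) p = p" unfolding w_def using AH_comp[OF AH pX gc g0c] g0p gp by simp
    have wdyn: "sets_tendsto (\<lambda>i. \<phi> (w i) ` K) n" if K: "compact K" "K \<subseteq> A - {p}" for K
    proof -
      have KX: "K \<subseteq> X" using K AX by blast
      have cK': "compact (\<phi> g0 ` K)"
        using compact_continuous_image[OF continuous_on_subset[OF AH_facts(5)[OF AH g0c] KX] K(1)] .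
      have "\<phi> g0 ` K \<subseteq> A" using K g0A by blast
      moreover have "p \<notin> \<phi> g0 ` K" using avoid_img[OF AH g0c KX pX g0p] K by blast
      ultimately have "\<phi> g0 ` K \<subseteq> A - {p}" by blast
      hence "sets_tendsto (\<lambda>i. \<phi> (g (r i)) ` (\<phi> g0 ` K)) n" using st_subseq[OF r gdyn[OF cK']] by blast
      thus ?thesis unfolding w_def using img_comp[OF AH gc g0c KX] by simp
    qed
    define v where "v i = inv\<^bsub>G\<^esub> (w i)" for i
    have vc: "\<And>i. v i \<in> carrier G" unfolding v_def using AH_inv_closed[OF AH wc] .
    have vA: "\<And>i. \<phi> (v i) ` A = A" unfolding v_def using stab_inv[OF AH wc AX wA] .
    have vD: "\<And>i. \<phi> (v i) ` D = D" unfolding v_def using stab_inv[OF AH wc DX wD] .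
    have vp: "\<And>i. \<phi> (v i) p = p" unfolding v_def using AH_facts(3)[OF AH wc pX] wp by metis
    have vdyn: "\<And>K. compact K \<Longrightarrow> K \<subseteq> A - {n} \<Longrightarrow> sets_tendsto (\<lambda>i. \<phi> (v i) ` K) p"
      unfolding v_def using inv_dyn[OF AH AX PF_compact[OF P A] wc wA wdyn] by blast
    have AD: "A \<inter> D = {n}"
    proof
      show "{n} \<subseteq> A \<inter> D" using nA nD by blast
      show "A \<inter> D \<subseteq> {n}"
      proof
        fix y assume y: "y \<in> A \<inter> D"
        show "y \<in> {n}"
        proof (rule ccontr)
          assume yn: "y \<notin> {n}"
          have st: "sets_tendsto (\<lambda>i. \<phi> (v i) ` {y}) p" using y yn by (intro vdyn) auto
          have "p \<in> D"
          proof (rule ev_meet_closed[OF Dcl])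
            fix \<epsilon> :: real assume e: "\<epsilon> > 0"
            have "eventually (\<lambda>i. \<phi> (v i) y \<in> ball p \<epsilon>) sequentially"
              using st_point[OF st, of "ball p \<epsilon>"] e by simp
            thus "eventually (\<lambda>i. D \<inter> ball p \<epsilon> \<noteq> {}) sequentially"
            proof (rule eventually_mono)
              fix i assume "\<phi> (v i) y \<in> ball p \<epsilon>"
              moreover have "\<phi> (v i) y \<in> D" using vD[of i] y by blast
              ultimately show "D \<inter> ball p \<epsilon> \<noteq> {}" by blast
            qed
          qed
          thus False using pD by blast
        qed
      qed
    qed
    have vs: "\<And>i. v i \<in> Stab G \<phi> A \<inter> Stab G \<phi> D" unfolding Stab_def using vc vA vD by blast
    show False using lemK[OF P A DA AD pA pD vs vp vdyn] .
  qed
  have claim: "j < k \<Longrightarrow> sets_tendsto (\<lambda>i. \<phi> (g i) ` (L ! j)) n" for j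
  proof (induction j)
    case 0
    have "crosses X A (L ! 0)" using cr[of 0] M0 MS[OF kpos] by simp
    hence wc: "wcross X (L ! 0) A" using crosses_wcross by blast
    obtain T where T: "\<And>i. T i \<subseteq> X" "sets_tendsto T n" "\<And>i. wcross X (\<phi> (g i) ` (L ! 0)) (T i)"
    proof (cases "L ! 0 \<inter> A \<noteq> {}")
      case True
      then obtain y where y: "y \<in> L ! 0" "y \<in> A" by blast
      have yp: "y \<noteq> p" using y Lav[OF kpos] by blast
      show ?thesis
      proof (rule that[of "\<lambda>i. \<phi> (g i) ` {y}"])
        show "\<And>i. \<phi> (g i) ` {y} \<subseteq> X" using gA y AX by blast
        show "sets_tendsto (\<lambda>i. \<phi> (g i) ` {y}) n" using y yp by (intro gdyn) auto
        show "\<And>i. wcross X (\<phi> (g i) ` (L ! 0)) (\<phi> (g i) ` {y})"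
          unfolding wcross_def using y by blast
      qed
    next
      case False
      hence "separates_set X (L ! 0) A" using wc unfolding wcross_def by blast
      then obtain w z where wz: "w \<in> A - {p}" "z \<in> A - {p}" "separates_pts X (L ! 0) w z"
        using trick[OF LC AX Lcl[OF kpos] pA _ pni] Lav[OF kpos] by blast
      show ?thesis
      proof (rule that[of "\<lambda>i. \<phi> (g i) ` {w, z}"])
        show "\<And>i. \<phi> (g i) ` {w, z} \<subseteq> X" using gA wz AX by blast
        show "sets_tendsto (\<lambda>i. \<phi> (g i) ` {w, z}) n" using wz by (intro gdyn) auto
        show "\<And>i. wcross X (\<phi> (g i) ` (L ! 0)) (\<phi> (g i) ` {w, z})"
          unfolding wcross_def separates_set_def using sep_pres[OF AH gc LX[OF kpos] wz(3)] by blast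
      qed
    qed
    show ?case using step[OF P gc LA[OF kpos] T(1) nX T(2,3)] noconst[OF kpos] by blast
  next
    case (Suc j)
    have j: "j < k" "Suc j < k" using Suc.prems by auto
    have IH: "sets_tendsto (\<lambda>i. \<phi> (g i) ` (L ! j)) n" using Suc.IH j by simp
    have "crosses X (L ! j) (L ! Suc j)" using cr[of "Suc j"] MS[OF j(1)] MS[OF j(2)] j by simp
    hence wc: "wcross X (L ! Suc j) (L ! j)" using crosses_wcross by blast
    have T: "\<And>i. \<phi> (g i) ` (L ! j) \<subseteq> X" using AH_facts(1)[OF AH gc] LX[OF j(1)] by blast
    have wci: "\<And>i. wcross X (\<phi> (g i) ` (L ! Suc j)) (\<phi> (g i) ` (L ! j))"
      using wcross_pres[OF AH gc LX[OF j(2)] LX[OF j(1)] wc] .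
    show ?case using step[OF P gc LA[OF j(2)] T nX IH wci] noconst[OF j(2)] by blast
  qed
  define j where "j = k - 1"
  have j: "j < k" "Suc j = k" using kpos unfolding j_def by auto
  have Tj: "sets_tendsto (\<lambda>i. \<phi> (g i) ` (L ! j)) n" using claim[OF j(1)] .
  have "crosses X (L ! j) B" using cr[of k] MS[OF j(1)] Mk j by simp
  hence wc: "wcross X B (L ! j)" using crosses_wcross by blast
  have wci: "\<And>i. wcross X B (\<phi> (g i) ` (L ! j))"
    using wcross_pres[OF AH gc BX LX[OF j(1)] wc] gB by metis
  show "n \<in> B"
  proof (rule ev_meet_closed[OF PF(4)[OF P B]])
    fix \<epsilon> :: real assume "\<epsilon> > 0"
    thus "eventually (\<lambda>i. B \<inter> ball n \<epsilon> \<noteq> {}) sequentially"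
      using meet[OF LC nX _ Tj wci] AH_facts(1)[OF AH gc] LX[OF j(1)] by blast
  qed
qed

theorem lemma4p6:
  fixes X :: "'a::metric_space set" and G :: "('g, 'c) monoid_scheme"
    and \<phi> :: "'g \<Rightarrow> 'a \<Rightarrow> 'a" and \<A> :: "'a set set"
    and f :: "nat \<Rightarrow> 'g" and A B :: "'a set" and n p :: 'a
  assumes "local_convergence_pairing X G \<phi> \<A>"
    and "A \<in> \<A>" and "B \<in> \<A>"
    and "\<forall>i. f i \<in> Stab G \<phi> A \<inter> Stab G \<phi> B"
    and "convergence_seq A (\<lambda>i. \<phi> (f i)) n p"
    and "\<exists>m. convergence_seq B (\<lambda>i. \<phi> (f i)) m p"
  shows "convergence_seq B (\<lambda>i. \<phi> (f i)) n p"
proof -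
  note P = assms(1) and A = assms(2) and B = assms(3) and csA = assms(5)
  have f: "\<And>i. f i \<in> Stab G \<phi> A \<inter> Stab G \<phi> B" using assms(4) by blast
  have f': "\<And>i. f i \<in> Stab G \<phi> B \<inter> Stab G \<phi> A" using assms(4) by blast
  obtain m where csB: "convergence_seq B (\<lambda>i. \<phi> (f i)) m p" using assms(6) by blast
  have AH: "acts_by_homeos G \<phi> X" using PF(3)[OF P] .
  have fc: "\<And>i. f i \<in> carrier G" and fA: "\<And>i. \<phi> (f i) ` A = A" and fB: "\<And>i. \<phi> (f i) ` B = B"
    using f unfolding Stab_def by auto
  have AX: "A \<subseteq> X" and BX: "B \<subseteq> X" using PF(5)[OF P] A B by auto
  have pA: "p \<in> A" and nA: "n \<in> A" using csA unfolding convergence_seq_def by auto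
  have pB: "p \<in> B" and mB: "m \<in> B" using csB unfolding convergence_seq_def by auto
  have dA: "\<And>K. compact K \<Longrightarrow> K \<subseteq> A - {n} \<Longrightarrow> sets_tendsto (\<lambda>i. \<phi> (f i) ` K) p"
    using csA unfolding convergence_seq_def by blast
  have dB: "\<And>K. compact K \<Longrightarrow> K \<subseteq> B - {m} \<Longrightarrow> sets_tendsto (\<lambda>i. \<phi> (f i) ` K) p"
    using csB unfolding convergence_seq_def by blast
  have "n = m"
  proof (cases "\<exists>y \<in> A \<inter> B. y \<noteq> p")
    case True
    then obtain y where y: "y \<in> A" "y \<in> B" "y \<noteq> p" by blast
    have t1: "sets_tendsto (\<lambda>i. \<phi> (inv\<^bsub>G\<^esub> (f i)) ` {y}) n"
      using inv_dyn[OF AH AX PF_compact[OF P A] fc fA dA, where K="{y}"] y by auto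
    have t2: "sets_tendsto (\<lambda>i. \<phi> (inv\<^bsub>G\<^esub> (f i)) ` {y}) m"
      using inv_dyn[OF AH BX PF_compact[OF P B] fc fB dB, where K="{y}"] y by auto
    show "n = m"
    proof (rule ccontr)
      assume nm: "n \<noteq> m"
      define d where "d = dist n m / 2"
      have d: "d > 0" using nm unfolding d_def by simp
      have "eventually (\<lambda>i. \<phi> (inv\<^bsub>G\<^esub> (f i)) y \<in> ball n d \<and> \<phi> (inv\<^bsub>G\<^esub> (f i)) y \<in> ball m d) sequentially"
        using st_point[OF t1, of "ball n d"] st_point[OF t2, of "ball m d"] d
        by (simp add: eventually_conj)
      then obtain i where "\<phi> (inv\<^bsub>G\<^esub> (f i)) y \<in> ball n d" "\<phi> (inv\<^bsub>G\<^esub> (f i)) y \<in> ball m d"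
        using ev_get by blast
      hence "dist n m < 2 * d" using dist_triangle[of n m "\<phi> (inv\<^bsub>G\<^esub> (f i)) y"]
        by (simp add: dist_commute)
      thus False unfolding d_def by simp
    qed
  next
    case False
    hence AB: "A \<inter> B = {p}" using pA pB by blast
    have "n \<in> B" using lemL[OF P A B AB f csA] .
    hence n: "n = p" using AB nA by blast
    have "m \<in> A" using lemL[OF P B A _ f' csB] AB by (simp add: Int_commute)
    hence "m = p" using AB mB by blast
    thus "n = m" using n by simp
  qed
  thus ?thesis using csB by simp
qed

end
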